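(* $\mathsf{C}_2\times\mathsf{AUC}_{[0,1]}\not\le_W\mathsf{ConC}_{[0,1]}$.
   Context: A represented space is a pair $(X,\delta_X)$ with $\delta_X:\subseteq\mathbb{N}^\mathbb{N}\to X$ a partial surjection; $[0,1]$ carries its Cauchy representation. A realizer of $f:\subseteq X\rightrightarrows Y$ is a partial $F$ with $\delta_Y F(p)\in f(\delta_X(p))$ for all $p\in\mathrm{dom}(f\circ\delta_X)$. $f\le_W g$ if there are computable partial $H,K:\subseteq\mathbb{N}^\mathbb{N}\to\mathbb{N}^\mathbb{N}$ such that $p\mapsto H\langle p,GK(p)\rangle$ realizes $f$ for every realizer $G$ of $g$. $f\times g$ denotes $(x,z)\mapsto f(x)\times g(z)$. $\mathcal{A}_-(X)$ denotes closed subsets represented by negative information (for $\{0,1\}$: a name enumerates the complement; for $[0,1]$: a name enumerates rational open intervals whose union is the complement). Closed choice $\mathsf C_X:\subseteq\mathcal A_-(X)\rightrightarrows X$, $A\mapsto A$, is defined on nonempty $A$; $\mathsf C_2$ is closed choice on $\{0,1\}$. $\mathsf{AUC}_{[0,1]}$ is $\mathsf C_{[0,1]}$ restricted to the sets $[0,1]$ and $\{x\}$, $x\in[0,1]$. $\mathsf{ConC}_{[0,1]}$ is $\mathsf C_{[0,1]}$ restricted to intervals $[a,b]$, $0\le a\le b\le1$. *)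

theory Defs
  imports Complex_Main "HOL-Library.Nat_Bijection"
begin

text \<open>recfn n f: f, restricted to argument lists of length n, is a total recursive
  function of arity n.\<close>

inductive recfn :: "nat \<Rightarrow> (nat list \<Rightarrow> nat) \<Rightarrow> bool" where
  rf_zero: "recfn n (\<lambda>_. 0)"
| rf_succ: "recfn 1 (\<lambda>xs. Suc (hd xs))"
| rf_proj: "i < n \<Longrightarrow> recfn n (\<lambda>xs. xs ! i)"
| rf_comp: "recfn m f \<Longrightarrow> length gs = m \<Longrightarrow> (\<forall>g\<in>set gs. recfn n g)
            \<Longrightarrow> recfn n (\<lambda>xs. f (map (\<lambda>g. g xs) gs))"
| rf_prim: "recfn n f \<Longrightarrow> recfn (Suc (Suc n)) g
            \<Longrightarrow> recfn (Suc n) (\<lambda>xs. rec_nat (f (tl xs)) (\<lambda>y r. g (y # r # tl xs)) (hd xs))"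
| rf_mu: "recfn (Suc n) f \<Longrightarrow> (\<forall>xs. length xs = n \<longrightarrow> (\<exists>y. f (y # xs) = 0))
            \<Longrightarrow> recfn n (\<lambda>xs. LEAST y. f (y # xs) = 0)"

type_synonym baire = "nat \<Rightarrow> nat"

text \<open>F is computable iff some total recursive g, on input (n, code of a prefix of p),
  returns 0 (no answer yet) or Suc of the n-th output symbol; for every p in the
  domain of F an answer eventually appears and all answers are correct.\<close>

definition computable :: "(baire \<Rightarrow> baire option) \<Rightarrow> bool" where
  "computable F \<longleftrightarrow> (\<exists>g. recfn 1 g \<and>
     (\<forall>p q. F p = Some q \<longrightarrow> (\<forall>n.
        (\<exists>k. 0 < g [prod_encode (n, list_encode (map p [0..<k]))]) \<and>
        (\<forall>k. 0 < g [prod_encode (n, list_encode (map p [0..<k]))] \<longrightarrow>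
              g [prod_encode (n, list_encode (map p [0..<k]))] = Suc (q n)))))"

definition bpair :: "baire \<Rightarrow> baire \<Rightarrow> baire" where
  "bpair p q = (\<lambda>n. if even n then p (n div 2) else q (n div 2))"

type_synonym 'a rep = "baire \<Rightarrow> 'a option"

text \<open>Multivalued partial functions f : X \<rightrightarrows> Y are 'a \<Rightarrow> 'b set, dom f = {x. f x \<noteq> {}}.\<close>

definition realizer :: "'a rep \<Rightarrow> 'b rep \<Rightarrow> ('a \<Rightarrow> 'b set) \<Rightarrow> (baire \<Rightarrow> baire option) \<Rightarrow> bool" where
  "realizer dX dY f F \<longleftrightarrow> (\<forall>p x. dX p = Some x \<and> f x \<noteq> {} \<longrightarrow>
      (\<exists>q y. F p = Some q \<and> dY q = Some y \<and> y \<in> f x))"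

definition weihrauch_le ::
  "'a rep \<Rightarrow> 'b rep \<Rightarrow> ('a \<Rightarrow> 'b set) \<Rightarrow> 'c rep \<Rightarrow> 'd rep \<Rightarrow> ('c \<Rightarrow> 'd set) \<Rightarrow> bool" where
  "weihrauch_le dX dY f dZ dW g \<longleftrightarrow> (\<exists>H K. computable H \<and> computable K \<and>
     (\<forall>G. realizer dZ dW g G \<longrightarrow>
        realizer dX dY f (\<lambda>p. Option.bind (K p) (\<lambda>k. Option.bind (G k) (\<lambda>r. H (bpair p r))))))"

definition rep_prod :: "'a rep \<Rightarrow> 'b rep \<Rightarrow> ('a \<times> 'b) rep" where
  "rep_prod d1 d2 r = (case (d1 (\<lambda>n. r (2*n)), d2 (\<lambda>n. r (2*n+1))) of
       (Some a, Some b) \<Rightarrow> Some (a, b) | _ \<Rightarrow> None)"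

definition mv_prod :: "('a \<Rightarrow> 'b set) \<Rightarrow> ('c \<Rightarrow> 'd set) \<Rightarrow> ('a \<times> 'c \<Rightarrow> ('b \<times> 'd) set)" where
  "mv_prod f g = (\<lambda>(x, z). f x \<times> g z)"

definition delta_2 :: "nat rep" where
  "delta_2 p = (if p 0 \<le> 1 then Some (p 0) else None)"

text \<open>Negative information on {0,1}: p(n) = Suc k enumerates k into the complement.\<close>
definition delta_A2 :: "nat set rep" where
  "delta_A2 p = Some ({0, 1} - {k. \<exists>n. p n = Suc k})"

definition nu_Q :: "nat \<Rightarrow> real" where
  "nu_Q n = (case prod_decode n of (i, j) \<Rightarrow> of_int (int_decode i) / of_nat (Suc j))"

definition delta_I :: "real rep" where
  "delta_I p = (if \<exists>x\<in>{0..1}. \<forall>n. \<bar>nu_Q (p n) - x\<bar> \<le> (1/2)^n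
                then Some (THE x. x \<in> {0..1} \<and> (\<forall>n. \<bar>nu_Q (p n) - x\<bar> \<le> (1/2)^n))
                else None)"

definition rat_interval :: "nat \<Rightarrow> real set" where
  "rat_interval k = (case prod_decode k of (i, j) \<Rightarrow> {nu_Q i <..< nu_Q j})"

text \<open>Negative information on [0,1]: p(n) = Suc k enumerates the rational open
  interval with code k; the named set is [0,1] minus the union.\<close>
definition delta_AI :: "real set rep" where
  "delta_AI p = Some ({0..1} - (\<Union>n\<in>{n. p n \<noteq> 0}. rat_interval (p n - 1)))"

definition C_choice :: "'a set \<Rightarrow> 'a set" where
  "C_choice A = A"

abbreviation C2 :: "nat set \<Rightarrow> nat set" where
  "C2 \<equiv> C_choice"

definition AUC_I :: "real set \<Rightarrow> real set" where
  "AUC_I A = (if A = {0..1} \<or> (\<exists>x\<in>{0..1}. A = {x}) then A else {})"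

definition ConC_I :: "real set \<Rightarrow> real set" where
  "ConC_I A = (if \<exists>a b. 0 \<le> a \<and> a \<le> b \<and> b \<le> 1 \<and> A = {a..b} then A else {})"

end

theory Submission
  imports Defs "HOL-Analysis.Analysis"
begin


lemma nu_Q_surj: assumes "q \<in> \<rat>" shows "\<exists>c. nu_Q c = q"
proof -
  from assms obtain a b where b: "0 < b" and q: "q = of_int a / of_int b" by (rule Rats_cases')
  have "nu_Q (prod_encode (int_encode a, nat b - 1)) = of_int a / of_nat (Suc (nat b - 1))"
    by (simp add: nu_Q_def)
  also have "of_nat (Suc (nat b - 1)) = (of_int b :: real)" using b by simp
  finally show ?thesis using q by blast
qed

lemma rat_between: "(x::real) < y \<Longrightarrow> \<exists>c. x < nu_Q c \<and> nu_Q c < y"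
  using Rats_dense_in_real nu_Q_surj by metis

definition sn :: "real \<Rightarrow> baire" where
  "sn y n = (SOME c. \<bar>nu_Q c - y\<bar> < (1/2)^n)"

lemma sn_strict: "\<bar>nu_Q (sn y n) - y\<bar> < (1/2)^n"
proof -
  have "\<exists>c. y - (1/2)^n < nu_Q c \<and> nu_Q c < y + (1/2)^n"
    by (rule rat_between) simp
  then have "\<exists>c. \<bar>nu_Q c - y\<bar> < (1/2)^n" by (metis abs_diff_less_iff)
  then show ?thesis unfolding sn_def by (rule someI_ex)
qed

lemma small_zero: assumes "\<forall>n. \<bar>d::real\<bar> \<le> 2 * (1/2)^n" shows "d = 0"
proof (rule ccontr)
  assume "d \<noteq> 0"
  then have "0 < \<bar>d\<bar>/2" by simp
  then obtain n where "(1/2::real)^n < \<bar>d\<bar>/2" using real_arch_pow_inv[of "\<bar>d\<bar>/2" "1/2"] by auto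
  moreover have "\<bar>d\<bar> \<le> 2 * (1/2)^n" using assms by blast
  ultimately show False by linarith
qed

lemma delta_I_eq:
  assumes x: "x \<in> {0..1}" and r: "\<forall>n. \<bar>nu_Q (r n) - x\<bar> \<le> (1/2)^n"
  shows "delta_I r = Some x"
proof -
  have uniq: "x' = x" if "\<forall>n. \<bar>nu_Q (r n) - x'\<bar> \<le> (1/2)^n" for x'
  proof -
    have "\<forall>n. \<bar>x' - x\<bar> \<le> 2 * (1/2)^n"
    proof
      fix n
      have "\<bar>x' - x\<bar> \<le> \<bar>nu_Q (r n) - x'\<bar> + \<bar>nu_Q (r n) - x\<bar>" by linarith
      also have "\<dots> \<le> 2 * (1/2)^n" using spec[OF that, of n] spec[OF r, of n] by linarith
      finally show "\<bar>x' - x\<bar> \<le> 2 * (1/2)^n" .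
    qed
    then show ?thesis using small_zero[of "x' - x"] by simp
  qed
  have "(THE x'. x' \<in> {0..1} \<and> (\<forall>n. \<bar>nu_Q (r n) - x'\<bar> \<le> (1/2)^n)) = x"
  proof (rule the_equality)
    show "x \<in> {0..1} \<and> (\<forall>n. \<bar>nu_Q (r n) - x\<bar> \<le> (1/2)^n)" using x r by blast
  next
    fix x' assume "x' \<in> {0..1} \<and> (\<forall>n. \<bar>nu_Q (r n) - x'\<bar> \<le> (1/2)^n)"
    then show "x' = x" using uniq by blast
  qed
  moreover have "\<exists>x\<in>{0..1}. \<forall>n. \<bar>nu_Q (r n) - x\<bar> \<le> (1/2)^n" using x r by blast
  ultimately show ?thesis unfolding delta_I_def by simp
qed

lemma delta_I_Some:
  assumes "delta_I r = Some x"
  shows "x \<in> {0..1} \<and> (\<forall>n. \<bar>nu_Q (r n) - x\<bar> \<le> (1/2)^n)"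
proof -
  from assms obtain x0 where x0: "x0 \<in> {0..1}" "\<forall>n. \<bar>nu_Q (r n) - x0\<bar> \<le> (1/2)^n"
    unfolding delta_I_def by (auto split: if_splits)
  then have "delta_I r = Some x0" by (rule delta_I_eq)
  with assms x0 show ?thesis by simp
qed

lemma sn_name: "y \<in> {0..1} \<Longrightarrow> delta_I (sn y) = Some y"
  by (rule delta_I_eq) (auto intro: less_imp_le sn_strict)

lemma persist:
  assumes r: "\<forall>n. \<bar>nu_Q (r n) - y\<bar> < (1/2)^n"
  shows "\<exists>\<rho>>0. \<forall>y'\<in>{0..1}. \<bar>y' - y\<bar> < \<rho> \<longrightarrow>
           (\<exists>r'. delta_I r' = Some y' \<and> (\<forall>i<k. r' i = r i))"
proof -
  define \<rho> where "\<rho> = Min (insert 1 ((\<lambda>n. (1/2)^n - \<bar>nu_Q (r n) - y\<bar>) ` {..<k}))"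
  have pos: "\<rho> > 0" unfolding \<rho>_def using r by (subst Min_gr_iff) auto
  have le: "\<rho> \<le> (1/2)^n - \<bar>nu_Q (r n) - y\<bar>" if "n < k" for n
    unfolding \<rho>_def by (rule Min_le) (use that in auto)
  show ?thesis
  proof (intro exI[of _ \<rho>] conjI pos ballI impI)
    fix y' :: real assume y': "y' \<in> {0..1}" "\<bar>y' - y\<bar> < \<rho>"
    define r' where "r' = (\<lambda>n. if n < k then r n else sn y' n)"
    have "delta_I r' = Some y'"
    proof (rule delta_I_eq[OF y'(1)], rule allI)
      fix n show "\<bar>nu_Q (r' n) - y'\<bar> \<le> (1/2)^n"
      proof (cases "n < k")
        case True
        then have "\<bar>nu_Q (r' n) - y'\<bar> \<le> \<bar>nu_Q (r n) - y\<bar> + \<bar>y' - y\<bar>" unfolding r'_def by simp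
        also have "\<dots> \<le> (1/2)^n" using le[OF True] y'(2) by simp
        finally show ?thesis .
      next
        case False then show ?thesis unfolding r'_def using sn_strict[of y' n] by simp
      qed
    qed
    then show "\<exists>r'. delta_I r' = Some y' \<and> (\<forall>i<k. r' i = r i)" unfolding r'_def by auto
  qed
qed



lemma bpair_even[simp]: "bpair c e (2*n) = c n" by (simp add: bpair_def)
lemma bpair_odd[simp]: "bpair c e (2*n+1) = e n" by (simp add: bpair_def)

lemma rep_prod_bpair: "rep_prod d1 d2 (bpair c e) =
   (case (d1 c, d2 e) of (Some a, Some b) \<Rightarrow> Some (a, b) | _ \<Rightarrow> None)"
  unfolding rep_prod_def by (simp del: bpair_even bpair_odd add: bpair_def[abs_def])

lemma bpair_agree:
  assumes "\<forall>i<m. p' i = p i" "\<forall>i<m. r' i = r i"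
  shows "\<forall>i<2*m. bpair p' r' i = bpair p r i"
  using assms unfolding bpair_def by auto

lemma computable_cont:
  assumes "computable F" "F p = Some q"
  shows "\<exists>k. \<forall>p' q'. (\<forall>i<k. p' i = p i) \<longrightarrow> F p' = Some q' \<longrightarrow> q' n = q n"
proof -
  from assms(1) obtain g where g: "\<forall>p q. F p = Some q \<longrightarrow> (\<forall>n.
        (\<exists>k. 0 < g [prod_encode (n, list_encode (map p [0..<k]))]) \<and>
        (\<forall>k. 0 < g [prod_encode (n, list_encode (map p [0..<k]))] \<longrightarrow>
              g [prod_encode (n, list_encode (map p [0..<k]))] = Suc (q n)))"
    unfolding computable_def by blast
  from g assms(2) obtain k where k: "0 < g [prod_encode (n, list_encode (map p [0..<k]))]" by blast
  have "q' n = q n" if a: "\<forall>i<k. p' i = p i" and b: "F p' = Some q'" for p' q'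
  proof -
    have "map p' [0..<k] = map p [0..<k]" using a by simp
    then have "g [prod_encode (n, list_encode (map p' [0..<k]))] = Suc (q' n)"
      using g b k by metis
    moreover have "g [prod_encode (n, list_encode (map p [0..<k]))] = Suc (q n)"
      using g assms(2) k by blast
    ultimately show ?thesis using \<open>map p' [0..<k] = map p [0..<k]\<close> by simp
  qed
  then show ?thesis by blast
qed

lemma computable_cont_mono:
  assumes "computable F" "F p = Some q"
  shows "\<exists>k. \<forall>k'\<ge>k. \<forall>p' q'. (\<forall>i<k'. p' i = p i) \<longrightarrow> F p' = Some q' \<longrightarrow> q' n = q n"
  using computable_cont[OF assms, of n] by (meson less_le_trans)

lemma finite_uniform:
  fixes P :: "'a \<Rightarrow> nat \<Rightarrow> bool"
  assumes "finite F" "\<forall>n\<in>F. \<exists>m. \<forall>m'\<ge>m. P n m'"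
  shows "\<exists>m. \<forall>n\<in>F. P n m"
proof -
  have "\<exists>m. \<forall>n\<in>F. \<forall>m'\<ge>m. P n m'" using assms
  proof (induction F rule: finite_induct)
    case empty then show ?case by simp
  next
    case (insert x F)
    then obtain m1 where m1: "\<forall>n\<in>F. \<forall>m'\<ge>m1. P n m'" by auto
    from insert obtain m2 where m2: "\<forall>m'\<ge>m2. P x m'" by auto
    have "\<forall>n\<in>insert x F. \<forall>m'\<ge>max m1 m2. P n m'"
    proof (intro ballI allI impI)
      fix n m' assume "n \<in> insert x F" "max m1 m2 \<le> m'"
      then show "P n m'" using m1 m2 by (cases "n = x") auto
    qed
    then show ?case by blast
  qed
  then show ?thesis by blast
qed

definition zs :: baire where "zs = (\<lambda>_. 0)"
definition cname :: "nat \<Rightarrow> nat \<Rightarrow> baire" where "cname b t n = (if n < t then 0 else Suc b)"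
definition ename :: "real \<Rightarrow> nat \<Rightarrow> baire" where
  "ename z s n = (if n < s then 0 else if z \<notin> rat_interval (n - s) then Suc (n - s) else 0)"

lemma delta_A2_zs: "delta_A2 zs = Some {0,1}" by (simp add: delta_A2_def zs_def)
lemma delta_A2_cname: "delta_A2 (cname b t) = Some ({0,1} - {b})"
proof -
  have "{k. \<exists>n. cname b t n = Suc k} = {b}" unfolding cname_def
    by (auto intro: exI[of _ t])
  then show ?thesis by (simp add: delta_A2_def)
qed
lemma delta_AI_zs: "delta_AI zs = Some {0..1}" by (simp add: delta_AI_def zs_def)

lemma rat_interval_code: "nu_Q i < w \<Longrightarrow> w < nu_Q j \<Longrightarrow> w \<in> rat_interval (prod_encode (i, j))"
  by (simp add: rat_interval_def)

lemma delta_AI_ename: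
  assumes z: "z \<in> {0..1}" shows "delta_AI (ename z s) = Some {z}"
proof -
  have U: "(\<Union>n\<in>{n. ename z s n \<noteq> 0}. rat_interval (ename z s n - 1)) = (\<Union>c\<in>{c. z \<notin> rat_interval c}. rat_interval c)"
  proof (rule set_eqI, rule iffI)
    fix w assume "w \<in> (\<Union>n\<in>{n. ename z s n \<noteq> 0}. rat_interval (ename z s n - 1))"
    then obtain n where "ename z s n \<noteq> 0" "w \<in> rat_interval (ename z s n - 1)" by blast
    then show "w \<in> (\<Union>c\<in>{c. z \<notin> rat_interval c}. rat_interval c)"
      unfolding ename_def by (auto split: if_splits)
  next
    fix w assume "w \<in> (\<Union>c\<in>{c. z \<notin> rat_interval c}. rat_interval c)"
    then obtain c where c: "z \<notin> rat_interval c" "w \<in> rat_interval c" by blast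
    have "ename z s (c + s) = Suc c" using c unfolding ename_def by simp
    then show "w \<in> (\<Union>n\<in>{n. ename z s n \<noteq> 0}. rat_interval (ename z s n - 1))"
      using c by (intro UN_I[of "c+s"]) auto
  qed
  have cover: "\<exists>c. z \<notin> rat_interval c \<and> w \<in> rat_interval c" if "w \<noteq> z" for w
  proof (cases "w < z")
    case True
    obtain i where i: "w - 1 < nu_Q i" "nu_Q i < w" using rat_between[of "w-1" w] by auto
    obtain j where j: "w < nu_Q j" "nu_Q j < z" using rat_between[OF True] by auto
    show ?thesis using i j by (intro exI[of _ "prod_encode (i,j)"]) (auto simp: rat_interval_def)
  next
    case False
    then have "z < w" using that by simp
    obtain i where i: "z < nu_Q i" "nu_Q i < w" using rat_between[OF \<open>z < w\<close>] by auto
    obtain j where j: "w < nu_Q j" "nu_Q j < w + 1" using rat_between[of w "w+1"] by auto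
    show ?thesis using i j by (intro exI[of _ "prod_encode (i,j)"]) (auto simp: rat_interval_def)
  qed
  have "{0..1} - (\<Union>c\<in>{c. z \<notin> rat_interval c}. rat_interval c) = {z}"
    using z cover by auto
  then show ?thesis unfolding delta_AI_def U by simp
qed

lemma delta_AI_sub: "delta_AI k = Some J \<Longrightarrow> J \<subseteq> {0..1}"
  by (auto simp: delta_AI_def)

lemma open_rat_interval: "open (rat_interval c)"
  by (simp add: rat_interval_def split: prod.split)

definition G0 :: "baire \<Rightarrow> baire option" where
  "G0 k = (if ConC_I (the (delta_AI k)) \<noteq> {} then Some (sn (SOME y. y \<in> the (delta_AI k))) else None)"

lemma ConC_I_ne: "ConC_I A \<noteq> {} \<Longrightarrow> ConC_I A = A \<and> (\<exists>a b. 0 \<le> a \<and> a \<le> b \<and> b \<le> 1 \<and> A = {a..b})"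
  unfolding ConC_I_def by (auto split: if_splits)

lemma realizer_mod:
  assumes "\<And>k'. G k' \<noteq> G0 k' \<Longrightarrow> ConC_I (the (delta_AI k')) \<noteq> {} \<and> (\<exists>r y. G k' = Some r \<and> delta_I r = Some y \<and> y \<in> the (delta_AI k'))"
  shows "realizer delta_AI delta_I ConC_I G"
  unfolding realizer_def
proof (intro allI impI)
  fix p A assume a: "delta_AI p = Some A \<and> ConC_I A \<noteq> {}"
  then have A: "ConC_I A = A" "A \<noteq> {}" "A \<subseteq> {0..1}" using ConC_I_ne delta_AI_sub by blast+
  show "\<exists>q y. G p = Some q \<and> delta_I q = Some y \<and> y \<in> ConC_I A"
  proof (cases "G p = G0 p")
    case True
    define y0 where "y0 = (SOME y. y \<in> A)"
    have y0: "y0 \<in> A" using A(2) unfolding y0_def by (simp add: some_in_eq)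
    then have "delta_I (sn y0) = Some y0" using A(3) by (intro sn_name) auto
    moreover have "G p = Some (sn y0)" using True a A unfolding G0_def y0_def by simp
    ultimately show ?thesis using y0 A(1) by auto
  next
    case False
    then show ?thesis using assms[of p] a A by auto
  qed
qed

lemma realizer_G0: "realizer delta_AI delta_I ConC_I G0"
  by (rule realizer_mod) simp



definition setof :: "baire \<Rightarrow> real set" where "setof k = the (delta_AI k)"

lemma setof_eq: "setof k = {0..1} - (\<Union>n\<in>{n. k n \<noteq> 0}. rat_interval (k n - 1))"
  by (simp add: setof_def delta_AI_def)

lemma setof_sub: "setof k \<subseteq> {0..1}" by (auto simp: setof_eq)

lemma AUC_full: "AUC_I {0..1} = {0..1}" by (simp add: AUC_I_def)
lemma AUC_single: "z \<in> {0..1} \<Longrightarrow> AUC_I {z} = {z}" by (auto simp: AUC_I_def)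

lemma thick:
  assumes "computable K" "K p = Some k" "\<delta> > 0"
  shows "\<exists>m. \<forall>p' k'. (\<forall>i<m. p' i = p i) \<longrightarrow> K p' = Some k' \<longrightarrow>
            (\<forall>y\<in>setof k'. \<exists>u\<in>setof k. \<bar>y - u\<bar> < \<delta>)"
proof -
  define S where "S = {0..1} \<inter> (\<Inter>u\<in>setof k. - ball u \<delta>)"
  have "compact S" unfolding S_def
    by (intro compact_Int_closed compact_Icc closed_INT) auto
  moreover have "S \<subseteq> (\<Union>n\<in>{n. k n \<noteq> 0}. rat_interval (k n - 1))"
  proof
    fix y assume y: "y \<in> S"
    then have "y \<notin> setof k" using \<open>\<delta> > 0\<close> unfolding S_def by auto
    moreover have "y \<in> {0..1}" using y S_def by auto
    ultimately show "y \<in> (\<Union>n\<in>{n. k n \<noteq> 0}. rat_interval (k n - 1))" unfolding setof_eq by blast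
  qed
  ultimately obtain F where F: "F \<subseteq> {n. k n \<noteq> 0}" "finite F" "S \<subseteq> (\<Union>n\<in>F. rat_interval (k n - 1))"
    using open_rat_interval by (metis (no_types, lifting) compactE_image)
  have "\<forall>n\<in>F. \<exists>m. \<forall>m'\<ge>m. (\<forall>p' k'. (\<forall>i<m'. p' i = p i) \<longrightarrow> K p' = Some k' \<longrightarrow> k' n = k n)"
    using computable_cont_mono[OF assms(1,2)] by blast
  from finite_uniform[OF F(2) this] obtain m where
    m: "\<forall>n\<in>F. \<forall>p' k'. (\<forall>i<m. p' i = p i) \<longrightarrow> K p' = Some k' \<longrightarrow> k' n = k n" by blast
  have "\<exists>u\<in>setof k. \<bar>y - u\<bar> < \<delta>" if a: "\<forall>i<m. p' i = p i" "K p' = Some k'" "y \<in> setof k'" for p' k' y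
  proof (rule ccontr)
    assume "\<not> ?thesis"
    moreover have "y \<in> {0..1}" using a(3) setof_sub by blast
    ultimately have "y \<in> S" unfolding S_def by (auto simp: dist_real_def abs_minus_commute)
    then obtain n where n: "n \<in> F" "y \<in> rat_interval (k n - 1)" using F(3) by blast
    have "k' n = k n" using m n(1) a(1,2) by blast
    moreover have "k n \<noteq> 0" using n(1) F(1) by blast
    ultimately show False using a(3) n(2) unfolding setof_eq by (metis (mono_tags, lifting) DiffD2 UN_I mem_Collect_eq)
  qed
  then show ?thesis by blast
qed

locale red =
  fixes H K :: "baire \<Rightarrow> baire option"
  assumes cH: "computable H" and cK: "computable K"
  and hyp: "\<And>G. realizer delta_AI delta_I ConC_I G \<Longrightarrow>
     realizer (rep_prod delta_A2 delta_AI) (rep_prod delta_2 delta_I) (mv_prod C2 AUC_I)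
       (\<lambda>p. Option.bind (K p) (\<lambda>k. Option.bind (G k) (\<lambda>r. H (bpair p r))))"
begin

lemma U:
  assumes c: "delta_A2 c = Some A" "A \<noteq> {}" and e: "delta_AI e = Some Z" "AUC_I Z \<noteq> {}"
    and G: "realizer delta_AI delta_I ConC_I G"
  shows "\<exists>k r q x. K (bpair c e) = Some k \<and> G k = Some r \<and> H (bpair (bpair c e) r) = Some q
           \<and> q 0 \<in> A \<and> delta_I (\<lambda>n. q (2*n+1)) = Some x \<and> x \<in> AUC_I Z"
proof -
  have rp: "rep_prod delta_A2 delta_AI (bpair c e) = Some (A, Z)"
    using c e by (simp add: rep_prod_bpair)
  have ne: "mv_prod C2 AUC_I (A, Z) \<noteq> {}" using c e by (simp add: mv_prod_def C_choice_def)
  from hyp[OF G] rp ne obtain q y where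
    q: "Option.bind (K (bpair c e)) (\<lambda>k. Option.bind (G k) (\<lambda>r. H (bpair (bpair c e) r))) = Some q"
    and y: "rep_prod delta_2 delta_I q = Some y" "y \<in> mv_prod C2 AUC_I (A, Z)"
    unfolding realizer_def by blast
  from q obtain k r where kr: "K (bpair c e) = Some k" "G k = Some r" "H (bpair (bpair c e) r) = Some q"
    by (cases "K (bpair c e)"; cases "G (the (K (bpair c e)))") auto
  from y obtain a x where ax: "delta_2 (\<lambda>n. q (2*n)) = Some a" "delta_I (\<lambda>n. q (2*n+1)) = Some x" "y = (a, x)"
    unfolding rep_prod_def by (auto split: option.splits)
  have "a = q 0" using ax(1) by (simp add: delta_2_def split: if_splits)
  then show ?thesis using kr ax y(2) by (auto simp: mv_prod_def C_choice_def)
qed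

lemma U1:
  assumes "delta_A2 c = Some A" "A \<noteq> {}" "delta_AI e = Some Z" "AUC_I Z \<noteq> {}"
  shows "\<exists>k. K (bpair c e) = Some k \<and> ConC_I (setof k) \<noteq> {}"
proof -
  from U[OF assms realizer_G0] obtain k r where "K (bpair c e) = Some k" "G0 k = Some r" by blast
  then show ?thesis unfolding G0_def setof_def by (auto split: if_splits)
qed

lemma U2:
  assumes "delta_A2 c = Some A" "A \<noteq> {}" "delta_AI e = Some Z" "AUC_I Z \<noteq> {}"
    and k: "K (bpair c e) = Some k" and y: "y \<in> setof k" and r: "delta_I r = Some y"
  shows "\<exists>q x. H (bpair (bpair c e) r) = Some q \<and> q 0 \<in> A \<and> delta_I (\<lambda>n. q (2*n+1)) = Some x \<and> x \<in> AUC_I Z"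
proof -
  have ne: "ConC_I (setof k) \<noteq> {}" using U1[OF assms(1-4)] k by auto
  define G where "G = G0(k := Some r)"
  have "realizer delta_AI delta_I ConC_I G"
  proof (rule realizer_mod)
    fix k' assume "G k' \<noteq> G0 k'"
    then have "k' = k" unfolding G_def by (cases "k' = k") auto
    then show "ConC_I (the (delta_AI k')) \<noteq> {} \<and> (\<exists>r y. G k' = Some r \<and> delta_I r = Some y \<and> y \<in> the (delta_AI k'))"
      using ne y r unfolding G_def setof_def by auto
  qed
  from U[OF assms(1-4) this] k show ?thesis unfolding G_def by auto
qed

lemma J_interval:
  assumes "delta_A2 c = Some A" "A \<noteq> {}" "delta_AI e = Some Z" "AUC_I Z \<noteq> {}"
  shows "\<exists>k a b. K (bpair c e) = Some k \<and> a \<le> b \<and> setof k = {a..b}"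
  using U1[OF assms] ConC_I_ne by metis

end


definition p0 :: baire where "p0 = bpair zs zs"
definition Pin :: "real \<Rightarrow> nat \<Rightarrow> baire" where "Pin z s = bpair zs (ename z s)"
definition Qin :: "real \<Rightarrow> nat \<Rightarrow> nat \<Rightarrow> nat \<Rightarrow> baire" where "Qin z s b t = bpair (cname b t) (ename z s)"

lemma Pin_agree: "\<forall>i<2* s. Pin z s i = p0 i"
  unfolding Pin_def p0_def by (rule bpair_agree) (auto simp: ename_def zs_def)

lemma Qin_agree_PP: "\<forall>i<2*t. Qin z s b t i = Pin z s i"
  unfolding Pin_def Qin_def by (rule bpair_agree) (auto simp: cname_def zs_def)

lemma Qin_agree_p0: "s \<le> t \<Longrightarrow> \<forall>i<2* s. Qin z s b t i = p0 i"
  unfolding p0_def Qin_def by (rule bpair_agree) (auto simp: cname_def ename_def zs_def)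

lemma agree_mono: "\<forall>i<m. f i = g i \<Longrightarrow> (m'::nat) \<le> m \<Longrightarrow> \<forall>i<m'. f i = g i" by auto

lemma bit_ne: "b \<le> 1 \<Longrightarrow> {0,1::nat} - {b} \<noteq> {}" by auto

context red begin

definition X :: "real \<Rightarrow> real" where
  "X y = the (delta_I (\<lambda>n. the (H (bpair p0 (sn y))) (2*n+1)))"

lemma p0_facts: "\<exists>k0 a0 b0. K p0 = Some k0 \<and> a0 \<le> b0 \<and> setof k0 = {a0..b0}"
  using J_interval[OF delta_A2_zs _ delta_AI_zs] AUC_full unfolding p0_def by auto

lemma Pin_facts: "z \<in> {0..1} \<Longrightarrow> \<exists>k a b. K (Pin z s) = Some k \<and> a \<le> b \<and> setof k = {a..b}"
  using J_interval[OF delta_A2_zs _ delta_AI_ename] AUC_single unfolding Pin_def by auto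

lemma Qin_facts: "z \<in> {0..1} \<Longrightarrow> b \<le> 1 \<Longrightarrow> \<exists>k a c. K (Qin z s b t) = Some k \<and> a \<le> c \<and> setof k = {a..c}"
  using J_interval[OF delta_A2_cname bit_ne delta_AI_ename] AUC_single unfolding Qin_def by auto

lemma Xlab:
  assumes "K p0 = Some k0" "y \<in> setof k0"
  shows "\<exists>q. H (bpair p0 (sn y)) = Some q \<and> q 0 \<in> {0,1} \<and> delta_I (\<lambda>n. q (2*n+1)) = Some (X y)"
proof -
  have y: "y \<in> {0..1}" using assms(2) setof_sub by blast
  from U2[OF delta_A2_zs _ delta_AI_zs _ assms(1)[unfolded p0_def] assms(2) sn_name[OF y]]
  obtain q x where "H (bpair p0 (sn y)) = Some q" "q 0 \<in> {0,1}" "delta_I (\<lambda>n. q (2*n+1)) = Some x"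
    using AUC_full unfolding p0_def by auto
  then show ?thesis unfolding X_def by auto
qed

lemma in_J0:
  assumes k0: "K p0 = Some k0" and J0: "setof k0 = {a0..b0}"
    and v: "v \<in> {0..1}"
    and freq: "\<And>\<epsilon> m. \<epsilon> > 0 \<Longrightarrow> \<exists>p' k' y. (\<forall>i<m. p' i = p0 i) \<and> K p' = Some k' \<and> y \<in> setof k' \<and> \<bar>y - v\<bar> < \<epsilon>"
  shows "v \<in> setof k0"
proof (rule ccontr)
  assume nv: "v \<notin> setof k0"
  define d where "d = (if v < a0 then a0 - v else v - b0)"
  have d: "d > 0" using nv J0 unfolding d_def by auto
  have far: "\<bar>u - v\<bar> \<ge> d" if "u \<in> setof k0" for u using that J0 unfolding d_def by auto
  from thick[OF cK k0, of "d/2"] d obtain m where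
    m: "\<forall>p' k'. (\<forall>i<m. p' i = p0 i) \<longrightarrow> K p' = Some k' \<longrightarrow> (\<forall>y\<in>setof k'. \<exists>u\<in>setof k0. \<bar>y - u\<bar> < d/2)"
    by auto
  from freq[of "d/2" m] d obtain p' k' y where
    "\<forall>i<m. p' i = p0 i" "K p' = Some k'" "y \<in> setof k'" "\<bar>y - v\<bar> < d/2" by auto
  with m obtain u where "u \<in> setof k0" "\<bar>y - u\<bar> < d/2" by blast
  with far[of u] \<open>\<bar>y - v\<bar> < d/2\<close> show False by linarith
qed

lemma S1:
  assumes z: "z \<in> {0..1}" and k0: "K p0 = Some k0" and J0: "setof k0 = {a0..b0}"
    and freq: "\<And>N. \<exists>s\<ge>N. y \<in> setof (the (K (Pin z s)))"
  shows "y \<in> setof k0 \<and> X y = z"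
proof -
  have PPk: "K (Pin z s) = Some (the (K (Pin z s)))" for s
  proof -
    from Pin_facts[OF z, of s] obtain k where "K (Pin z s) = Some k" by blast
    then show ?thesis by simp
  qed
  obtain s1 where "y \<in> setof (the (K (Pin z s1)))" using freq by blast
  then have y01: "y \<in> {0..1}" using setof_sub by blast
  have yJ: "y \<in> setof k0"
  proof (rule in_J0[OF k0 J0 y01])
    fix \<epsilon> :: real and m :: nat assume "\<epsilon> > 0"
    obtain s where s: "s \<ge> m" "y \<in> setof (the (K (Pin z s)))" using freq by blast
    have "\<forall>i<m. Pin z s i = p0 i" using Pin_agree[of s z] s(1) by simp
    then show "\<exists>p' k' y'. (\<forall>i<m. p' i = p0 i) \<and> K p' = Some k' \<and> y' \<in> setof k' \<and> \<bar>y' - y\<bar> < \<epsilon>"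
      using s(2) PPk[of s] \<open>\<epsilon> > 0\<close>
      by (intro exI[of _ "Pin z s"] exI[of _ "the (K (Pin z s))"] exI[of _ y]) simp
  qed
  obtain q0 where q0: "H (bpair p0 (sn y)) = Some q0" "delta_I (\<lambda>n. q0 (2*n+1)) = Some (X y)"
    using Xlab[OF k0 yJ] by blast
  define PY where "PY = bpair p0 (sn y)"
  have q0': "H PY = Some q0" using q0(1) unfolding PY_def .
  have "\<forall>n. \<bar>X y - z\<bar> \<le> 2 * (1/2)^n"
  proof
    fix n
    have "\<exists>k. \<forall>p' q'. (\<forall>i<k. p' i = PY i) \<longrightarrow> H p' = Some q' \<longrightarrow> q' (2*n+1) = q0 (2*n+1)"
      by (rule computable_cont[OF cH q0'])
    then obtain kk where kk: "\<forall>p' q'. (\<forall>i<kk. p' i = PY i) \<longrightarrow> H p' = Some q' \<longrightarrow> q' (2*n+1) = q0 (2*n+1)"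
      by blast
    obtain s where s: "s \<ge> kk" "y \<in> setof (the (K (Pin z s)))" using freq[of kk] by (elim exE conjE) (rule that)
    have ne1: "{0,1::nat} \<noteq> {}" by simp
    have ne2: "AUC_I {z} \<noteq> {}" using AUC_single[OF z] by simp
    have kP: "K (bpair zs (ename z s)) = Some (the (K (Pin z s)))" using PPk[of s] unfolding Pin_def .
    have yP: "y \<in> setof (the (K (Pin z s)))" by (rule s(2))
    obtain q' x' where q'0: "H (bpair (bpair zs (ename z s)) (sn y)) = Some q'"
       "delta_I (\<lambda>n. q' (2*n+1)) = Some x'" "x' \<in> AUC_I {z}"
      using U2[OF delta_A2_zs ne1 delta_AI_ename[OF z] ne2 kP yP sn_name[OF y01]] by (elim exE conjE) (rule that)
    have q': "H (bpair (Pin z s) (sn y)) = Some q'" "delta_I (\<lambda>n. q' (2*n+1)) = Some x'" "x' \<in> AUC_I {z}"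
      using q'0 by (simp_all add: Pin_def)
    have x': "x' = z" using q'(3) AUC_single[OF z] by simp
    have "\<forall>i<2*(2* s). bpair (Pin z s) (sn y) i = bpair p0 (sn y) i"
      by (rule bpair_agree) (use Pin_agree[of s z] in simp_all)
    then have ag: "\<forall>i<kk. bpair (Pin z s) (sn y) i = PY i" using s(1) unfolding PY_def by simp
    have eq: "q' (2*n+1) = q0 (2*n+1)" by (rule kk[THEN spec, THEN spec, THEN mp, THEN mp, OF ag q'(1)])
    have "\<bar>nu_Q (q0 (2*n+1)) - X y\<bar> \<le> (1/2)^n" using delta_I_Some[OF q0(2)] by auto
    moreover have "\<bar>nu_Q (q' (2*n+1)) - x'\<bar> \<le> (1/2)^n" using delta_I_Some[OF q'(2)] by auto
    ultimately show "\<bar>X y - z\<bar> \<le> 2 * (1/2)^n" unfolding eq x' by linarith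
  qed
  then have "X y - z = 0" by (rule small_zero)
  then show ?thesis using yJ by simp
qed

end


lemma strict_mono_ge: "strict_mono (\<phi>::nat\<Rightarrow>nat) \<Longrightarrow> s \<le> \<phi> s"
  by (rule strict_mono_imp_increasing)

context red begin

lemma Qin_K: "z \<in> {0..1} \<Longrightarrow> b \<le> 1 \<Longrightarrow> K (Qin z s b t) = Some (the (K (Qin z s b t)))"
  using Qin_facts[of z b s t] by force

lemma S2:
  assumes z: "z \<in> {0..1}" and k0: "K p0 = Some k0" and J0: "setof k0 = {a0..b0}" and b: "b \<le> 1"
    and \<tau>: "\<forall>s. \<tau> s \<ge> s"
    and w: "\<forall>s. w s \<in> setof (the (K (Qin z s b (\<tau> s))))"
    and \<phi>: "strict_mono \<phi>" and lim: "(w \<circ> \<phi>) \<longlonglongrightarrow> v"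
  shows "v \<in> setof k0 \<and> the (H (bpair p0 (sn v))) 0 \<noteq> b"
proof -
  have w01: "w s \<in> {0..1}" for s using w setof_sub by blast
  have v01: "v \<in> {0..1}"
    by (rule closed_sequentially[OF closed_atLeastAtMost _ lim]) (use w01 in simp)
  have agr: "\<forall>i<m. Qin z (\<phi> s) b (\<tau> (\<phi> s)) i = p0 i" if "m \<le> 2 * s" for m s
  proof -
    have "s \<le> \<phi> s" using strict_mono_ge[OF \<phi>] .
    then have "\<forall>i<2 * \<phi> s. Qin z (\<phi> s) b (\<tau> (\<phi> s)) i = p0 i" using Qin_agree_p0 \<tau> by blast
    then show ?thesis using that \<open>s \<le> \<phi> s\<close> by simp
  qed
  have vJ: "v \<in> setof k0"
  proof (rule in_J0[OF k0 J0 v01])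
    fix \<epsilon> :: real and m :: nat assume e: "\<epsilon> > 0"
    from lim e obtain no where no: "\<forall>n\<ge>no. \<bar>(w \<circ> \<phi>) n - v\<bar> < \<epsilon>" unfolding LIMSEQ_iff by auto
    define s where "s = max no m"
    have "\<bar>w (\<phi> s) - v\<bar> < \<epsilon>" using no unfolding s_def by auto
    moreover have "\<forall>i<m. Qin z (\<phi> s) b (\<tau> (\<phi> s)) i = p0 i" by (rule agr) (simp add: s_def)
    moreover have "w (\<phi> s) \<in> setof (the (K (Qin z (\<phi> s) b (\<tau> (\<phi> s)))))" using w by blast
    moreover note Qin_K[OF z b, of "\<phi> s" "\<tau> (\<phi> s)"]
    ultimately show "\<exists>p' k' y. (\<forall>i<m. p' i = p0 i) \<and> K p' = Some k' \<and> y \<in> setof k' \<and> \<bar>y - v\<bar> < \<epsilon>"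
      by blast
  qed
  obtain q0 where q0: "H (bpair p0 (sn v)) = Some q0" "q0 0 \<in> {0,1}" using Xlab[OF k0 vJ] by blast
  define PV where "PV = bpair p0 (sn v)"
  have q0': "H PV = Some q0" using q0(1) unfolding PV_def .
  have "\<exists>k. \<forall>p' q'. (\<forall>i<k. p' i = PV i) \<longrightarrow> H p' = Some q' \<longrightarrow> q' 0 = q0 0"
    by (rule computable_cont[OF cH q0'])
  then obtain kk where kk: "\<forall>p' q'. (\<forall>i<kk. p' i = PV i) \<longrightarrow> H p' = Some q' \<longrightarrow> q' 0 = q0 0"
    by blast
  have "\<forall>n. \<bar>nu_Q (sn v n) - v\<bar> < (1/2)^n" using sn_strict by blast
  from persist[OF this, of kk] obtain \<rho> where \<rho>: "\<rho> > 0"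
    "\<forall>y'\<in>{0..1}. \<bar>y' - v\<bar> < \<rho> \<longrightarrow> (\<exists>r'. delta_I r' = Some y' \<and> (\<forall>i<kk. r' i = sn v i))" by blast
  from lim \<rho>(1) obtain no where no: "\<forall>n\<ge>no. \<bar>(w \<circ> \<phi>) n - v\<bar> < \<rho>" unfolding LIMSEQ_iff by auto
  define s where "s = max no kk"
  define s' where "s' = \<phi> s"
  have "\<bar>w s' - v\<bar> < \<rho>" using no unfolding s_def s'_def by auto
  then obtain r' where r': "delta_I r' = Some (w s')" "\<forall>i<kk. r' i = sn v i" using \<rho>(2) w01 by blast
  define Q where "Q = Qin z s' b (\<tau> s')"
  have QA: "\<forall>i<kk. Q i = p0 i" unfolding Q_def s'_def by (rule agr) (simp add: s_def)
  have ne1: "{0,1::nat} - {b} \<noteq> {}" using b by auto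
  have ne2: "AUC_I {z} \<noteq> {}" using AUC_single[OF z] by simp
  have kQ: "K (bpair (cname b (\<tau> s')) (ename z s')) = Some (the (K Q))"
    using Qin_K[OF z b, of s' "\<tau> s'"] unfolding Q_def Qin_def .
  have wQ: "w s' \<in> setof (the (K Q))" using w unfolding Q_def by blast
  obtain q' x' where q'0: "H (bpair (bpair (cname b (\<tau> s')) (ename z s')) r') = Some q'" "q' 0 \<in> {0,1} - {b}"
    using U2[OF delta_A2_cname ne1 delta_AI_ename[OF z] ne2 kQ wQ r'(1)] by (elim exE conjE) (rule that)
  have q': "H (bpair Q r') = Some q'" using q'0(1) unfolding Q_def Qin_def .
  have "\<forall>i<2*kk. bpair Q r' i = bpair p0 (sn v) i" by (rule bpair_agree[OF QA r'(2)])
  then have ag: "\<forall>i<kk. bpair Q r' i = PV i" unfolding PV_def by simp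
  have "q' 0 = q0 0" by (rule kk[THEN spec, THEN spec, THEN mp, THEN mp, OF ag q'])
  then have "q0 0 \<noteq> b" using q'0(2) by simp
  then show ?thesis using vJ q0(1) by simp
qed

end


context red begin

lemma Pin_K: "z \<in> {0..1} \<Longrightarrow> K (Pin z s) = Some (the (K (Pin z s)))"
  using Pin_facts[of z s] by force

lemma bit01: "K p0 = Some k0 \<Longrightarrow> v \<in> setof k0 \<Longrightarrow> the (H (bpair p0 (sn v))) 0 \<in> {0,1}"
  using Xlab by force

lemma S3:
  assumes z: "z \<in> {0..1}"
  shows "\<exists>y0 y1. y0 < y1 \<and> (\<forall>y. y0 < y \<and> y < y1 \<longrightarrow> X y = z)"
proof -
  obtain k0 a0 b0 where k0: "K p0 = Some k0" and J0: "setof k0 = {a0..b0}" using p0_facts by blast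
  define kP where "kP s = the (K (Pin z s))" for s
  have kPK: "K (Pin z s) = Some (kP s)" for s unfolding kP_def by (rule Pin_K[OF z])
  have "\<forall>s. \<exists>t. t \<ge> s \<and> (\<forall>p' k'. (\<forall>i<t. p' i = Pin z s i) \<longrightarrow> K p' = Some k' \<longrightarrow>
          (\<forall>y\<in>setof k'. \<exists>u\<in>setof (kP s). \<bar>y - u\<bar> < inverse (real (Suc s))))"
  proof
    fix s
    obtain m where m: "\<forall>p' k'. (\<forall>i<m. p' i = Pin z s i) \<longrightarrow> K p' = Some k' \<longrightarrow>
          (\<forall>y\<in>setof k'. \<exists>u\<in>setof (kP s). \<bar>y - u\<bar> < inverse (real (Suc s)))"
      using thick[OF cK kPK[of s], of "inverse (real (Suc s))"] by auto
    show "\<exists>t. t \<ge> s \<and> (\<forall>p' k'. (\<forall>i<t. p' i = Pin z s i) \<longrightarrow> K p' = Some k' \<longrightarrow>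
          (\<forall>y\<in>setof k'. \<exists>u\<in>setof (kP s). \<bar>y - u\<bar> < inverse (real (Suc s))))"
    proof (rule exI[of _ "max m s"], intro conjI allI impI)
      show "s \<le> max m s" by simp
      fix p' k' assume a: "\<forall>i<max m s. p' i = Pin z s i" "K p' = Some k'"
      then have "\<forall>i<m. p' i = Pin z s i" by simp
      then show "\<forall>y\<in>setof k'. \<exists>u\<in>setof (kP s). \<bar>y - u\<bar> < inverse (real (Suc s))" using spec[OF spec[OF m, of p'], of k'] a(2) by blast
    qed
  qed
  then have "\<exists>\<tau>. \<forall>s. \<tau> s \<ge> s \<and> (\<forall>p' k'. (\<forall>i<\<tau> s. p' i = Pin z s i) \<longrightarrow> K p' = Some k' \<longrightarrow>
          (\<forall>y\<in>setof k'. \<exists>u\<in>setof (kP s). \<bar>y - u\<bar> < inverse (real (Suc s))))"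
    by (rule choice)
  then obtain \<tau> where \<tau>all: "\<forall>s. \<tau> s \<ge> s \<and> (\<forall>p' k'. (\<forall>i<\<tau> s. p' i = Pin z s i) \<longrightarrow> K p' = Some k' \<longrightarrow>
          (\<forall>y\<in>setof k'. \<exists>u\<in>setof (kP s). \<bar>y - u\<bar> < inverse (real (Suc s))))"
    by (elim exE) (rule that)
  have \<tau>: "\<And>s. \<tau> s \<ge> s" using \<tau>all by blast
  have \<tau>2: "\<And>s p' k'. (\<forall>i<\<tau> s. p' i = Pin z s i) \<Longrightarrow> K p' = Some k' \<Longrightarrow>
          (\<forall>y\<in>setof k'. \<exists>u\<in>setof (kP s). \<bar>y - u\<bar> < inverse (real (Suc s)))"
  proof -
    fix s p' k' assume "\<forall>i<\<tau> s. p' i = Pin z s i" "K p' = Some k'"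
    then show "\<forall>y\<in>setof k'. \<exists>u\<in>setof (kP s). \<bar>y - u\<bar> < inverse (real (Suc s))"
      using spec[OF spec[OF conjunct2[OF spec[OF \<tau>all, of s]], of p'], of k'] by blast
  qed
  define kQ where "kQ b s = the (K (Qin z s b (\<tau> s)))" for b s
  have kQK: "b \<le> 1 \<Longrightarrow> K (Qin z s b (\<tau> s)) = Some (kQ b s)" for b s unfolding kQ_def by (rule Qin_K[OF z])
  have kQne: "b \<le> 1 \<Longrightarrow> setof (kQ b s) \<noteq> {}" for b s
    using Qin_facts[OF z, of b s "\<tau> s"] kQK[of b s] by auto
  define w where "w b s = (SOME y. y \<in> setof (kQ b s))" for b s
  have w: "b \<le> 1 \<Longrightarrow> w b s \<in> setof (kQ b s)" for b s
    unfolding w_def using kQne by (simp add: some_in_eq)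
  have QPagree: "\<forall>i<\<tau> s. Qin z s b (\<tau> s) i = Pin z s i" for b s
    using Qin_agree_PP[of "\<tau> s" z s b] by simp
  have uex: "b \<le> 1 \<Longrightarrow> \<exists>u\<in>setof (kP s). \<bar>w b s - u\<bar> < inverse (real (Suc s))" for b s
    using \<tau>2[OF QPagree kQK] w by blast
  define u where "u b s = (SOME u. u \<in> setof (kP s) \<and> \<bar>w b s - u\<bar> < inverse (real (Suc s)))" for b s
  have u: "b \<le> 1 \<Longrightarrow> u b s \<in> setof (kP s) \<and> \<bar>w b s - u b s\<bar> < inverse (real (Suc s))" for b s
    unfolding u_def using uex[of b s] by (metis (mono_tags, lifting) someI_ex)
  define f where "f s = (w 0 s, w 1 s)" for s
  have w01: "w b s \<in> {0..1}" if "b \<le> 1" for b s using w[OF that, of s] setof_sub by blast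
  have f: "\<forall>s. f s \<in> {0..1::real} \<times> {0..1::real}" unfolding f_def using w01[of 0] w01[of 1] by simp
  have "seq_compact ({0..1::real} \<times> {0..1::real})"
    by (intro compact_imp_seq_compact compact_Times compact_Icc)
  then have "\<exists>l\<in>{0..1::real} \<times> {0..1::real}. \<exists>\<phi>. strict_mono \<phi> \<and> (f \<circ> \<phi>) \<longlonglongrightarrow> l"
    unfolding seq_compact_def using f by blast
  then obtain l \<phi> where \<phi>: "strict_mono \<phi>" and lim: "(f \<circ> \<phi>) \<longlonglongrightarrow> l" by blast
  define y0 where "y0 = fst l"
  define y1 where "y1 = snd l"
  have lim0: "(w 0 \<circ> \<phi>) \<longlonglongrightarrow> y0" using tendsto_fst[OF lim] unfolding y0_def f_def by (simp add: comp_def)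
  have lim1: "(w 1 \<circ> \<phi>) \<longlonglongrightarrow> y1" using tendsto_snd[OF lim] unfolding y1_def f_def by (simp add: comp_def)
  have wQ: "\<forall>s. w b s \<in> setof (the (K (Qin z s b (\<tau> s))))" if "b \<le> 1" for b
    using w[OF that] unfolding kQ_def by blast
  have B0: "y0 \<in> setof k0 \<and> the (H (bpair p0 (sn y0))) 0 \<noteq> 0"
    by (rule S2[OF z k0 J0 _ _ wQ[of 0] \<phi> lim0]) (use \<tau> in auto)
  have B1: "y1 \<in> setof k0 \<and> the (H (bpair p0 (sn y1))) 0 \<noteq> 1"
    by (rule S2[OF z k0 J0 _ _ wQ[of 1] \<phi> lim1]) (use \<tau> in auto)
  have c0: "the (H (bpair p0 (sn y0))) 0 \<in> {0,1}" using bit01[OF k0] B0 by blast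
  have c1: "the (H (bpair p0 (sn y1))) 0 \<in> {0,1}" using bit01[OF k0] B1 by blast
  have e0: "the (H (bpair p0 (sn y0))) 0 = 1" using c0 B0 by blast
  have e1: "the (H (bpair p0 (sn y1))) 0 = 0" using c1 B1 by blast
  have ne: "y0 \<noteq> y1"
  proof
    assume "y0 = y1"
    then show False using e0 e1 by simp
  qed
  have ulim: "(u b \<circ> \<phi>) \<longlonglongrightarrow> l'" if "b \<le> 1" "(w b \<circ> \<phi>) \<longlonglongrightarrow> l'" for b l'
  proof -
    have "(\<lambda>s. inverse (real (Suc s))) \<longlonglongrightarrow> 0" by (rule LIMSEQ_inverse_real_of_nat)
    then have inv: "(\<lambda>s. inverse (real (Suc (\<phi> s)))) \<longlonglongrightarrow> 0"
      using LIMSEQ_subseq_LIMSEQ[OF _ \<phi>] by (simp add: comp_def)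
    have "(\<lambda>s. u b (\<phi> s) - w b (\<phi> s)) \<longlonglongrightarrow> 0"
    proof (rule Lim_null_comparison[OF _ inv])
      show "\<forall>\<^sub>F s in sequentially. norm (u b (\<phi> s) - w b (\<phi> s)) \<le> inverse (real (Suc (\<phi> s)))"
        using u[OF that(1)] by (intro always_eventually allI) (simp add: abs_minus_commute less_imp_le)
    qed
    from tendsto_add[OF this that(2)[unfolded comp_def]] show ?thesis by (simp add: comp_def)
  qed
  have ul0: "(u 0 \<circ> \<phi>) \<longlonglongrightarrow> y0" by (rule ulim[OF _ lim0]) simp
  have ul1: "(u 1 \<circ> \<phi>) \<longlonglongrightarrow> y1" by (rule ulim[OF _ lim1]) simp
  have between: "X y = z" if y: "min y0 y1 < y" "y < max y0 y1" for y
  proof -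
    have ev: "\<forall>\<^sub>F s in sequentially. min (u 0 (\<phi> s)) (u 1 (\<phi> s)) < y \<and> y < max (u 0 (\<phi> s)) (u 1 (\<phi> s))"
    proof (cases "y0 < y1")
      case True
      then have "y0 < y" "y < y1" using y by auto
      then have "\<forall>\<^sub>F s in sequentially. u 0 (\<phi> s) < y" "\<forall>\<^sub>F s in sequentially. y < u 1 (\<phi> s)"
        using order_tendstoD(2)[OF ul0] order_tendstoD(1)[OF ul1] by (auto simp: comp_def)
      then show ?thesis by eventually_elim auto
    next
      case False
      then have "y1 < y" "y < y0" using y ne by auto
      then have "\<forall>\<^sub>F s in sequentially. u 1 (\<phi> s) < y" "\<forall>\<^sub>F s in sequentially. y < u 0 (\<phi> s)"
        using order_tendstoD(2)[OF ul1] order_tendstoD(1)[OF ul0] by (auto simp: comp_def)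
      then show ?thesis by eventually_elim auto
    qed
    then obtain N0 where N0: "\<forall>s\<ge>N0. min (u 0 (\<phi> s)) (u 1 (\<phi> s)) < y \<and> y < max (u 0 (\<phi> s)) (u 1 (\<phi> s))"
      unfolding eventually_sequentially by blast
    have freq: "\<exists>s\<ge>N. y \<in> setof (the (K (Pin z s)))" for N
    proof -
      define s where "s = max N N0"
      have s1: "min (u 0 (\<phi> s)) (u 1 (\<phi> s)) < y \<and> y < max (u 0 (\<phi> s)) (u 1 (\<phi> s))"
        using N0 unfolding s_def by simp
      obtain a c where ac: "setof (kP (\<phi> s)) = {a..c}"
        using Pin_facts[OF z, of "\<phi> s"] kPK[of "\<phi> s"] by auto
      have "u 0 (\<phi> s) \<in> {a..c}" "u 1 (\<phi> s) \<in> {a..c}" using u[of 0 "\<phi> s"] u[of 1 "\<phi> s"] ac by auto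
      then have "y \<in> setof (kP (\<phi> s))" using s1 ac by auto
      moreover have "N \<le> \<phi> s" using strict_mono_ge[OF \<phi>, of s] unfolding s_def by simp
      ultimately show ?thesis unfolding kP_def by blast
    qed
    show ?thesis using S1[OF z k0 J0 freq] by blast
  qed
  show ?thesis using ne between by (intro exI[of _ "min y0 y1"] exI[of _ "max y0 y1"]) auto
qed

lemma contradiction: False
proof -
  have "\<forall>z\<in>{0..1::real}. \<exists>q\<in>\<rat>. X q = z"
  proof
    fix z :: real assume z: "z \<in> {0..1}"
    obtain y0 y1 where y: "y0 < y1" "\<forall>y. y0 < y \<and> y < y1 \<longrightarrow> X y = z" using S3[OF z] by blast
    obtain q where "q \<in> \<rat>" "y0 < q" "q < y1" using Rats_dense_in_real[OF y(1)] by blast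
    then show "\<exists>q\<in>\<rat>. X q = z" using y(2) by blast
  qed
  have "{0..1::real} \<subseteq> X ` \<rat>"
  proof
    fix z :: real assume "z \<in> {0..1}"
    with \<open>\<forall>z\<in>{0..1::real}. \<exists>q\<in>\<rat>. X q = z\<close> obtain q where "q \<in> \<rat>" "X q = z" by blast
    then have "z = X q" "q \<in> \<rat>" by simp_all
    then show "z \<in> X ` \<rat>" by (rule image_eqI)
  qed
  moreover have "countable (X ` \<rat>)" by (intro countable_image countable_rat)
  ultimately have "countable {0..1::real}" by (rule countable_subset)
  moreover have "uncountable {0..1::real}" by (simp add: uncountable_closed_interval)
  ultimately show False by simp
qed

end

theorem proposition17p3:
  shows "\<not> weihrauch_le (rep_prod delta_A2 delta_AI) (rep_prod delta_2 delta_I) (mv_prod C2 AUC_I)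
                        delta_AI delta_I ConC_I"
proof
  assume "weihrauch_le (rep_prod delta_A2 delta_AI) (rep_prod delta_2 delta_I) (mv_prod C2 AUC_I)
                        delta_AI delta_I ConC_I"
  then obtain H K where "computable H" "computable K"
    "\<forall>G. realizer delta_AI delta_I ConC_I G \<longrightarrow>
        realizer (rep_prod delta_A2 delta_AI) (rep_prod delta_2 delta_I) (mv_prod C2 AUC_I)
          (\<lambda>p. Option.bind (K p) (\<lambda>k. Option.bind (G k) (\<lambda>r. H (bpair p r))))"
    unfolding weihrauch_le_def by blast
  then interpret red H K by unfold_locales blast+
  show False by (rule contradiction)
qed


end
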